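(* Under the setting described in the context, assume that for all $x\in\mathcal{A}$ and all $i\in\{1,\dots,n\}$, $$d_{xi}>0 \implies \phi_{ix}>0.$$ Define $$\tilde J(i)=\sum_{x\in\mathcal{A}}\phi_{ix}\,r^*_x,\qquad i=1,\dots,n,$$ and $$\epsilon=\max_{x\in\mathcal{A}}\ \max_{\{i,j\,:\,\phi_{ix}>0,\ \phi_{jx}>0\}}|J^*(i)-J^*(j)|.$$ Then $$|J^*(i)-\tilde J(i)|\le \frac{\epsilon}{1-\alpha},\qquad i=1,\dots,n.$$
   Context: Consider a discounted Markov decision problem with states $1,\dots,n$. For each state $i$ there is a finite nonempty control set $U(i)$. Under control $u\in U(i)$, the system moves from $i$ to $j$ with probability $p_{ij}(u)$ (with $\sum_j p_{ij}(u)=1$) and incurs cost $g(i,u,j)\in\mathbb{R}$. The cost at stage $k$ is discounted by $\alpha^k$, where $\alpha\in(0,1)$. A (deterministic stationary) policy $\mu$ selects $\mu(i)\in U(i)$ for each $i$. $J_\mu(i)$ denotes the total expected discounted cost of $\mu$ starting from $i$, and $J^*(i)=\min_\mu J_\mu(i)$. Equivalently, $J^*$ is the unique solution of $$J^*(i)=\min_{u\in U(i)}\sum_{j=1}^n p_{ij}(u)\big(g(i,u,j)+\alpha J^*(j)\big),\qquad i=1,\dots,n.$$ Aggregation framework: Let $\mathcal{A}$ be a finite set of "aggregate states". For each $x\in\mathcal{A}$ we are given a probability distribution $\{d_{xi}\}_{i=1}^n$ on $\{1,\dots,n\}$ (the disaggregation probabilities). For each original state $j$ we are given a probability distribution $\{\phi_{jy}\}_{y\in\mathcal{A}}$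 on $\mathcal{A}$ (the aggregation probabilities). Define the operator $H:\mathbb{R}^{\mathcal{A}}\to\mathbb{R}^{\mathcal{A}}$ by $$(Hr)(x)=\sum_{i=1}^n d_{xi}\min_{u\in U(i)}\sum_{j=1}^n p_{ij}(u)\Big(g(i,u,j)+\alpha\sum_{y\in\mathcal{A}}\phi_{jy}\,r_y\Big),\qquad x\in\mathcal{A}.$$ $H$ is a contraction with respect to the maximum norm. Let $r^*=(r^*_x)_{x\in\mathcal{A}}$ be its unique fixed point $r^*=Hr^*$; this is the optimal cost vector of the aggregate problem. *)

theory Defs
  imports Complex_Main
begin

text \<open>Original states: a finite type 's (playing the role of 1..n).
  Aggregate states: a finite type 'a. Controls: elements of type 'c,
  with finite nonempty control sets U i.\<close>

definition Q_factor ::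
  "('s::finite \<Rightarrow> 'c \<Rightarrow> 's \<Rightarrow> real) \<Rightarrow> ('s \<Rightarrow> 'c \<Rightarrow> 's \<Rightarrow> real) \<Rightarrow> real \<Rightarrow>
   ('s \<Rightarrow> real) \<Rightarrow> 's \<Rightarrow> 'c \<Rightarrow> real" where
  "Q_factor p g \<alpha> J i u = (\<Sum>j\<in>UNIV. p i u j * (g i u j + \<alpha> * J j))"

definition bellman_T ::
  "('s::finite \<Rightarrow> 'c set) \<Rightarrow> ('s \<Rightarrow> 'c \<Rightarrow> 's \<Rightarrow> real) \<Rightarrow> ('s \<Rightarrow> 'c \<Rightarrow> 's \<Rightarrow> real) \<Rightarrow> real \<Rightarrow>
   ('s \<Rightarrow> real) \<Rightarrow> 's \<Rightarrow> real" where
  "bellman_T U p g \<alpha> J i = Min (Q_factor p g \<alpha> J i ` U i)"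

definition agg_H ::
  "('s::finite \<Rightarrow> 'c set) \<Rightarrow> ('s \<Rightarrow> 'c \<Rightarrow> 's \<Rightarrow> real) \<Rightarrow> ('s \<Rightarrow> 'c \<Rightarrow> 's \<Rightarrow> real) \<Rightarrow> real \<Rightarrow>
   ('a::finite \<Rightarrow> 's \<Rightarrow> real) \<Rightarrow> ('s \<Rightarrow> 'a \<Rightarrow> real) \<Rightarrow> ('a \<Rightarrow> real) \<Rightarrow> 'a \<Rightarrow> real" where
  "agg_H U p g \<alpha> d \<phi> r x =
     (\<Sum>i\<in>UNIV. d x i * bellman_T U p g \<alpha> (\<lambda>j. \<Sum>y\<in>UNIV. \<phi> j y * r y) i)"

end

theory Submission
  imports Defs
begin

lemma min_diff:
  fixes f g :: "'c \<Rightarrow> real"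
  assumes "finite U" "U \<noteq> {}" "\<And>u. u \<in> U \<Longrightarrow> \<bar>f u - g u\<bar> \<le> c"
  shows "\<bar>Min (f ` U) - Min (g ` U)\<bar> \<le> c"
proof -
  obtain u where u: "u \<in> U" "g u = Min (g ` U)"
    using assms(1,2) by (metis (mono_tags, lifting) Min_in finite_imageI image_iff image_is_empty)
  obtain v where v: "v \<in> U" "f v = Min (f ` U)"
    using assms(1,2) by (metis (mono_tags, lifting) Min_in finite_imageI image_iff image_is_empty)
  have "Min (f ` U) \<le> f u" using u assms(1) by simp
  moreover have "Min (g ` U) \<le> g v" using v assms(1) by simp
  moreover have "\<bar>f u - g u\<bar> \<le> c" "\<bar>f v - g v\<bar> \<le> c" using assms(3)[OF u(1)] assms(3)[OF v(1)] by blast+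
  ultimately have "Min (f ` U) - Min (g ` U) \<le> c" "Min (g ` U) - Min (f ` U) \<le> c"
    using u v by (simp_all add: abs_le_iff)
  thus ?thesis by linarith
qed

lemma Q_diff:
  fixes p g :: "'s::finite \<Rightarrow> 'c \<Rightarrow> 's \<Rightarrow> real"
  assumes pn: "\<And>j. p i u j \<ge> 0" and ps: "(\<Sum>j\<in>UNIV. p i u j) = 1"
    and a: "\<alpha> > 0" and D: "\<And>j. \<bar>J1 j - J2 j\<bar> \<le> D"
  shows "\<bar>Q_factor p g \<alpha> J1 i u - Q_factor p g \<alpha> J2 i u\<bar> \<le> \<alpha> * D"
proof -
  have "Q_factor p g \<alpha> J1 i u - Q_factor p g \<alpha> J2 i u = (\<Sum>j\<in>UNIV. p i u j * (\<alpha> * (J1 j - J2 j)))"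
    unfolding Q_factor_def by (simp add: sum_subtractf[symmetric] algebra_simps)
  also have "\<bar>\<dots>\<bar> \<le> (\<Sum>j\<in>UNIV. \<bar>p i u j * (\<alpha> * (J1 j - J2 j))\<bar>)" by (rule sum_abs)
  also have "\<dots> \<le> (\<Sum>j\<in>UNIV. p i u j * (\<alpha> * D))"
  proof (rule sum_mono)
    fix j
    have "\<bar>p i u j * (\<alpha> * (J1 j - J2 j))\<bar> = p i u j * (\<alpha> * \<bar>J1 j - J2 j\<bar>)"
      using pn a by (simp add: abs_mult)
    also have "\<dots> \<le> p i u j * (\<alpha> * D)"
      using pn a D by (simp add: mult_left_mono)
    finally show "\<bar>p i u j * (\<alpha> * (J1 j - J2 j))\<bar> \<le> p i u j * (\<alpha> * D)" .
  qed
  also have "\<dots> = \<alpha> * D" using ps by (simp add: sum_distrib_right[symmetric])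
  finally show ?thesis .
qed

theorem mainTheorem1:
  fixes U :: "'s::finite \<Rightarrow> 'c set"
    and p g :: "'s \<Rightarrow> 'c \<Rightarrow> 's \<Rightarrow> real"
    and \<alpha> :: real
    and d :: "'a::finite \<Rightarrow> 's \<Rightarrow> real"
    and \<phi> :: "'s \<Rightarrow> 'a \<Rightarrow> real"
    and Jstar :: "'s \<Rightarrow> real"
    and rstar :: "'a \<Rightarrow> real"
  assumes U_fin: "\<And>i. finite (U i)" and U_ne: "\<And>i. U i \<noteq> {}"
    and p_nonneg: "\<And>i u j. u \<in> U i \<Longrightarrow> p i u j \<ge> 0"
    and p_sum: "\<And>i u. u \<in> U i \<Longrightarrow> (\<Sum>j\<in>UNIV. p i u j) = 1"
    and alpha: "0 < \<alpha>" "\<alpha> < 1"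
    and d_nonneg: "\<And>x i. d x i \<ge> 0" and d_sum: "\<And>x. (\<Sum>i\<in>UNIV. d x i) = 1"
    and phi_nonneg: "\<And>j y. \<phi> j y \<ge> 0" and phi_sum: "\<And>j. (\<Sum>y\<in>UNIV. \<phi> j y) = 1"
    and Jstar_fix: "bellman_T U p g \<alpha> Jstar = Jstar"
    and rstar_fix: "agg_H U p g \<alpha> d \<phi> rstar = rstar"
    and support: "\<And>x i. d x i > 0 \<Longrightarrow> \<phi> i x > 0"
  shows "\<forall>i. \<bar>Jstar i - (\<Sum>x\<in>UNIV. \<phi> i x * rstar x)\<bar>
           \<le> Max {\<bar>Jstar i' - Jstar j'\<bar> | i' j' x. \<phi> i' x > 0 \<and> \<phi> j' x > 0} / (1 - \<alpha>)"
proof -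
  define S where "S = {\<bar>Jstar i' - Jstar j'\<bar> | i' j' x. \<phi> i' x > 0 \<and> \<phi> j' x > 0}"
  define eps where "eps = Max S"
  define Jt where "Jt = (\<lambda>j. \<Sum>y\<in>UNIV. \<phi> j y * rstar y)"
  define Dl where "Dl = Max (range (\<lambda>j. \<bar>Jt j - Jstar j\<bar>))"
  have Sfin: "finite S"
  proof -
    have "S \<subseteq> (\<lambda>(i,j). \<bar>Jstar i - Jstar j\<bar>) ` UNIV" unfolding S_def by auto
    thus ?thesis by (rule finite_subset) simp
  qed
  have epsI: "\<bar>Jstar i - Jstar j\<bar> \<le> eps" if "\<phi> i x > 0" "\<phi> j x > 0" for i j x
    unfolding eps_def using Sfin that by (intro Max_ge) (auto simp: S_def)
  have DlI: "\<bar>Jt j - Jstar j\<bar> \<le> Dl" for j unfolding Dl_def by simp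
  have DlI': "\<bar>Jstar j - Jt j\<bar> \<le> Dl" for j using DlI[of j] by linarith
  have Tdiff: "\<bar>bellman_T U p g \<alpha> Jt i - Jstar i\<bar> \<le> \<alpha> * Dl" for i
  proof -
    have "\<bar>bellman_T U p g \<alpha> Jt i - bellman_T U p g \<alpha> Jstar i\<bar> \<le> \<alpha> * Dl"
      unfolding bellman_T_def
      by (rule min_diff[OF U_fin U_ne], rule Q_diff[OF p_nonneg p_sum alpha(1) DlI])
    thus ?thesis using Jstar_fix by simp
  qed
  have rx: "\<bar>rstar x - Jstar k\<bar> \<le> \<alpha> * Dl + eps" if "\<phi> k x > 0" for x k
  proof -
    have "rstar x = (\<Sum>i\<in>UNIV. d x i * bellman_T U p g \<alpha> Jt i)"
      using fun_cong[OF rstar_fix, of x] unfolding agg_H_def Jt_def by simp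
    hence "rstar x - Jstar k = (\<Sum>i\<in>UNIV. d x i * (bellman_T U p g \<alpha> Jt i - Jstar k))"
      using d_sum[of x] by (simp add: sum_subtractf right_diff_distrib sum_distrib_right[symmetric])
    also have "\<bar>\<dots>\<bar> \<le> (\<Sum>i\<in>UNIV. \<bar>d x i * (bellman_T U p g \<alpha> Jt i - Jstar k)\<bar>)" by (rule sum_abs)
    also have "\<dots> \<le> (\<Sum>i\<in>UNIV. d x i * (\<alpha> * Dl + eps))"
    proof (rule sum_mono)
      fix i
      show "\<bar>d x i * (bellman_T U p g \<alpha> Jt i - Jstar k)\<bar> \<le> d x i * (\<alpha> * Dl + eps)"
      proof (cases "d x i > 0")
        case True
        have "\<bar>Jstar i - Jstar k\<bar> \<le> eps" using epsI[OF support[OF True] that] .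
        hence "\<bar>bellman_T U p g \<alpha> Jt i - Jstar k\<bar> \<le> \<alpha> * Dl + eps" using Tdiff[of i] by linarith
        thus ?thesis using True by (simp add: abs_mult mult_left_mono)
      next
        case False
        hence "d x i = 0" using d_nonneg[of x i] by linarith
        thus ?thesis by simp
      qed
    qed
    also have "\<dots> = \<alpha> * Dl + eps" using d_sum[of x] by (simp add: sum_distrib_right[symmetric])
    finally show ?thesis .
  qed
  have main: "\<bar>Jt k - Jstar k\<bar> \<le> \<alpha> * Dl + eps" for k
  proof -
    have "Jt k - Jstar k = (\<Sum>x\<in>UNIV. \<phi> k x * (rstar x - Jstar k))"
      unfolding Jt_def using phi_sum[of k]
      by (simp add: sum_subtractf right_diff_distrib sum_distrib_right[symmetric])
    also have "\<bar>\<dots>\<bar> \<le> (\<Sum>x\<in>UNIV. \<bar>\<phi> k x * (rstar x - Jstar k)\<bar>)" by (rule sum_abs)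
    also have "\<dots> \<le> (\<Sum>x\<in>UNIV. \<phi> k x * (\<alpha> * Dl + eps))"
    proof (rule sum_mono)
      fix x
      show "\<bar>\<phi> k x * (rstar x - Jstar k)\<bar> \<le> \<phi> k x * (\<alpha> * Dl + eps)"
      proof (cases "\<phi> k x > 0")
        case True
        thus ?thesis using rx[OF True] by (simp add: abs_mult mult_left_mono)
      next
        case False
        hence "\<phi> k x = 0" using phi_nonneg[of k x] by linarith
        thus ?thesis by simp
      qed
    qed
    also have "\<dots> = \<alpha> * Dl + eps" using phi_sum[of k] by (simp add: sum_distrib_right[symmetric])
    finally show ?thesis .
  qed
  have "Dl \<in> range (\<lambda>j. \<bar>Jt j - Jstar j\<bar>)" unfolding Dl_def by (rule Max_in) auto
  then obtain k where "Dl = \<bar>Jt k - Jstar k\<bar>" by auto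
  hence "Dl \<le> \<alpha> * Dl + eps" using main[of k] by simp
  hence "(1 - \<alpha>) * Dl \<le> eps" by (simp add: algebra_simps)
  hence Dle: "Dl \<le> eps / (1 - \<alpha>)" using alpha by (simp add: field_simps)
  show ?thesis
  proof
    fix i
    show "\<bar>Jstar i - (\<Sum>x\<in>UNIV. \<phi> i x * rstar x)\<bar> \<le> Max {\<bar>Jstar i' - Jstar j'\<bar> | i' j' x. \<phi> i' x > 0 \<and> \<phi> j' x > 0} / (1 - \<alpha>)"
      using DlI'[of i] Dle unfolding Jt_def eps_def S_def by linarith
  qed
qed

end
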